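(* Let $\Sigma\subseteq\mathcal L$ be closed under subformulas and let $\mathcal W=(W,\le,\ell,R)$ be a $\Sigma$-labelled system. Then its quotient $\mathcal Q=(W/{\sim},\le_{\mathcal Q},\ell_{\mathcal Q},R^+_{\mathcal Q})$ is a $\Sigma$-labelled system.
   Context: $\mathcal L$: formulas over propositional variables with $\wedge,\vee,\Rightarrow,\Leftarrow$ (co-implication), $\mathsf X,\mathsf Y,\mathsf G,\mathsf H,\mathsf U,\mathsf S$. Let $\Sigma\subseteq\mathcal L$ be closed under subformulas. A $\Sigma$-type is $\Phi\subseteq\Sigma$ such that: for $\varphi\wedge\psi\in\Sigma$, $\varphi\wedge\psi\in\Phi$ iff $\varphi,\psi\in\Phi$; for $\varphi\vee\psi\in\Sigma$, $\varphi\vee\psi\in\Phi$ iff $\varphi\in\Phi$ or $\psi\in\Phi$; for $\varphi\Rightarrow\psi\in\Sigma$, ($\varphi\Rightarrow\psi\in\Phi$ implies $\varphi\notin\Phi$ or $\psi\in\Phi$) and ($\psi\in\Phi$ implies $\varphi\Rightarrow\psi\in\Phi$); for $\varphi\Leftarrow\psi\in\Sigma$, ($\varphi\Leftarrow\psi\in\Phi$ implies $\varphi\in\Phi$) and ($\varphi\in\Phi,\psi\notin\Phi$ implies $\varphi\Leftarrow\psi\in\Phi$). A poset is locally linear if it is a disjoint union of linear posets; write $a\lessgtr b$ if $a\le b$ or $b\le a$. A $\Sigma$-labelled space is $(W,\le,\ell)$ with $(W,\le)$ locally linear, $\ell\colon W\to$ $\Sigma$-types, $w\le v\Rightarrow\ell(w)\supseteq\ell(v)$,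 such that whenever $\varphi\Rightarrow\psi\in\Sigma\setminus\ell(w)$ there is $v\le w$ with $\varphi\in\ell(v)$, $\psi\notin\ell(v)$, and whenever $\varphi\Leftarrow\psi\in\ell(w)$ there is $v\ge w$ with $\varphi\in\ell(v)$, $\psi\notin\ell(v)$. A relation $R\subseteq W\times W$ is convex if every image set and every preimage set of a point is convex in $\le$; fully confluent if (forth–down) $x\le x'Ry'$ implies $xRy\le y'$ for some $y$; (forth–up) $x'\ge xRy$ implies $x'Ry'\ge y$ for some $y'$; (back–down) $x'Ry'\ge y$ implies $x'\ge xRy$ for some $x$; (back–up) $xRy\le y'$ implies $x\le x'Ry'$ for some $x'$; bi-serial if every point has an $R$-successor and an $R$-predecessor. A pair $(\Phi,\Psi)$ of $\Sigma$-types is sensible if for formulas in $\Sigma$: $\mathsf X\varphi\in\Phi\iff\varphi\in\Psi$; $\mathsf Y\varphi\in\Psi\iff\varphi\in\Phi$; $\mathsf G\varphi\in\Phi\iff(\varphi\in\Phi\wedge\mathsf G\varphi\in\Psi)$; $\mathsf H\varphi\in\Psi\iff(\varphi\in\Psi\wedge\mathsf H\varphi\in\Phi)$; $\varphi\,\mathsf U\,\psi\in\Phi\iff(\psi\in\Phi$ or ($\varphi\in\Phi$ and $\varphi\,\mathsf U\,\psi\in\Psi$)); $\varphi\,\mathsf S\,\psi\in\Psi\iff(\psi\in\Psi$ or ($\varphi\in\Psi$ and $\varphi\,\mathsf S\,\psi\in\Phi$)). $R$ is sensible if $wRv$ implies $(\ell(w),\ell(v))$ sensible. A $\Sigma$-labelled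 system is a $\Sigma$-labelled space with a bi-serial, fully confluent, convex, sensible relation. Quotient: for $w\in W$ let $L(w)=\{\ell(v): v\lessgtr w\}$; $w\sim v$ iff $\ell(w)=\ell(v)$ and $L(w)=L(v)$. On $W/{\sim}$: $[w]\le_{\mathcal Q}[v]$ iff $L(w)=L(v)$ and $\ell(w)\supseteq\ell(v)$; $\ell_{\mathcal Q}([w])=\ell(w)$; $R_{\mathcal Q}$ is the smallest relation with $wRv\Rightarrow[w]R_{\mathcal Q}[v]$; $X R^+_{\mathcal Q} Y$ iff there are $X_1\le_{\mathcal Q}X\le_{\mathcal Q}X_2$ and $Y_1\le_{\mathcal Q}Y\le_{\mathcal Q}Y_2$ with $X_2R_{\mathcal Q}Y_1$ and $X_1R_{\mathcal Q}Y_2$. *)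

theory Defs
  imports Main "HOL-Library.Disjoint_Sets"
begin

datatype 'a fml =
    Var 'a
  | And "'a fml" "'a fml"
  | Or "'a fml" "'a fml"
  | Imp "'a fml" "'a fml"
  | Coimp "'a fml" "'a fml"   (* Coimp a b  represents  a \<Leftarrow> b *)
  | Nxt "'a fml"
  | Prv "'a fml"
  | Glob "'a fml"
  | Hist "'a fml"
  | Until "'a fml" "'a fml"
  | Since "'a fml" "'a fml"

fun subfmls :: "'a fml \<Rightarrow> 'a fml set" where
  "subfmls (Var p) = {Var p}"
| "subfmls (And a b) = insert (And a b) (subfmls a \<union> subfmls b)"
| "subfmls (Or a b) = insert (Or a b) (subfmls a \<union> subfmls b)"
| "subfmls (Imp a b) = insert (Imp a b) (subfmls a \<union> subfmls b)"
| "subfmls (Coimp a b) = insert (Coimp a b) (subfmls a \<union> subfmls b)"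
| "subfmls (Nxt a) = insert (Nxt a) (subfmls a)"
| "subfmls (Prv a) = insert (Prv a) (subfmls a)"
| "subfmls (Glob a) = insert (Glob a) (subfmls a)"
| "subfmls (Hist a) = insert (Hist a) (subfmls a)"
| "subfmls (Until a b) = insert (Until a b) (subfmls a \<union> subfmls b)"
| "subfmls (Since a b) = insert (Since a b) (subfmls a \<union> subfmls b)"

definition subfml_closed :: "'a fml set \<Rightarrow> bool" where
  "subfml_closed \<Sigma> \<longleftrightarrow> (\<forall>\<phi>\<in>\<Sigma>. subfmls \<phi> \<subseteq> \<Sigma>)"

definition is_type :: "'a fml set \<Rightarrow> 'a fml set \<Rightarrow> bool" where
  "is_type \<Sigma> \<Phi> \<longleftrightarrow> \<Phi> \<subseteq> \<Sigma> \<and>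
    (\<forall>a b. And a b \<in> \<Sigma> \<longrightarrow> (And a b \<in> \<Phi> \<longleftrightarrow> a \<in> \<Phi> \<and> b \<in> \<Phi>)) \<and>
    (\<forall>a b. Or a b \<in> \<Sigma> \<longrightarrow> (Or a b \<in> \<Phi> \<longleftrightarrow> a \<in> \<Phi> \<or> b \<in> \<Phi>)) \<and>
    (\<forall>a b. Imp a b \<in> \<Sigma> \<longrightarrow>
        (Imp a b \<in> \<Phi> \<longrightarrow> a \<notin> \<Phi> \<or> b \<in> \<Phi>) \<and> (b \<in> \<Phi> \<longrightarrow> Imp a b \<in> \<Phi>)) \<and>
    (\<forall>a b. Coimp a b \<in> \<Sigma> \<longrightarrow>
        (Coimp a b \<in> \<Phi> \<longrightarrow> a \<in> \<Phi>) \<and> (a \<in> \<Phi> \<and> b \<notin> \<Phi> \<longrightarrow> Coimp a b \<in> \<Phi>))"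

definition poset_on :: "'w set \<Rightarrow> ('w \<Rightarrow> 'w \<Rightarrow> bool) \<Rightarrow> bool" where
  "poset_on W le \<longleftrightarrow> (\<forall>x\<in>W. le x x) \<and>
     (\<forall>x\<in>W. \<forall>y\<in>W. le x y \<and> le y x \<longrightarrow> x = y) \<and>
     (\<forall>x\<in>W. \<forall>y\<in>W. \<forall>z\<in>W. le x y \<and> le y z \<longrightarrow> le x z)"

definition comparable :: "('w \<Rightarrow> 'w \<Rightarrow> bool) \<Rightarrow> 'w \<Rightarrow> 'w \<Rightarrow> bool" where
  "comparable le a b \<longleftrightarrow> le a b \<or> le b a"

definition locally_linear :: "'w set \<Rightarrow> ('w \<Rightarrow> 'w \<Rightarrow> bool) \<Rightarrow> bool" where
  "locally_linear W le \<longleftrightarrow> poset_on W le \<and>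
     (\<exists>P. partition_on W P \<and>
        (\<forall>C\<in>P. \<forall>a\<in>C. \<forall>b\<in>C. comparable le a b) \<and>
        (\<forall>C\<in>P. \<forall>D\<in>P. C \<noteq> D \<longrightarrow> (\<forall>a\<in>C. \<forall>b\<in>D. \<not> comparable le a b)))"

definition labelled_space ::
  "'a fml set \<Rightarrow> 'w set \<Rightarrow> ('w \<Rightarrow> 'w \<Rightarrow> bool) \<Rightarrow> ('w \<Rightarrow> 'a fml set) \<Rightarrow> bool" where
  "labelled_space \<Sigma> W le lab \<longleftrightarrow> locally_linear W le \<and>
     (\<forall>w\<in>W. is_type \<Sigma> (lab w)) \<and>
     (\<forall>w\<in>W. \<forall>v\<in>W. le w v \<longrightarrow> lab v \<subseteq> lab w) \<and>
     (\<forall>w\<in>W. \<forall>a b. Imp a b \<in> \<Sigma> - lab w \<longrightarrow>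
        (\<exists>v\<in>W. le v w \<and> a \<in> lab v \<and> b \<notin> lab v)) \<and>
     (\<forall>w\<in>W. \<forall>a b. Coimp a b \<in> lab w \<longrightarrow>
        (\<exists>v\<in>W. le w v \<and> a \<in> lab v \<and> b \<notin> lab v))"

definition convex_set :: "'w set \<Rightarrow> ('w \<Rightarrow> 'w \<Rightarrow> bool) \<Rightarrow> 'w set \<Rightarrow> bool" where
  "convex_set W le A \<longleftrightarrow> (\<forall>a\<in>A. \<forall>b\<in>A. \<forall>c\<in>W. le a c \<and> le c b \<longrightarrow> c \<in> A)"

definition convex_rel :: "'w set \<Rightarrow> ('w \<Rightarrow> 'w \<Rightarrow> bool) \<Rightarrow> ('w \<Rightarrow> 'w \<Rightarrow> bool) \<Rightarrow> bool" where
  "convex_rel W le R \<longleftrightarrow>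
     (\<forall>x\<in>W. convex_set W le {y\<in>W. R x y} \<and> convex_set W le {y\<in>W. R y x})"

definition fully_confluent :: "'w set \<Rightarrow> ('w \<Rightarrow> 'w \<Rightarrow> bool) \<Rightarrow> ('w \<Rightarrow> 'w \<Rightarrow> bool) \<Rightarrow> bool" where
  "fully_confluent W le R \<longleftrightarrow>
     (\<forall>x\<in>W. \<forall>x'\<in>W. \<forall>y'\<in>W. le x x' \<and> R x' y' \<longrightarrow> (\<exists>y\<in>W. R x y \<and> le y y')) \<and>
     (\<forall>x\<in>W. \<forall>x'\<in>W. \<forall>y\<in>W. le x x' \<and> R x y \<longrightarrow> (\<exists>y'\<in>W. R x' y' \<and> le y y')) \<and>
     (\<forall>x'\<in>W. \<forall>y'\<in>W. \<forall>y\<in>W. R x' y' \<and> le y y' \<longrightarrow> (\<exists>x\<in>W. le x x' \<and> R x y)) \<and>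
     (\<forall>x\<in>W. \<forall>y\<in>W. \<forall>y'\<in>W. R x y \<and> le y y' \<longrightarrow> (\<exists>x'\<in>W. le x x' \<and> R x' y'))"

definition bi_serial :: "'w set \<Rightarrow> ('w \<Rightarrow> 'w \<Rightarrow> bool) \<Rightarrow> bool" where
  "bi_serial W R \<longleftrightarrow> (\<forall>x\<in>W. (\<exists>y\<in>W. R x y) \<and> (\<exists>y\<in>W. R y x))"

definition sensible_pair :: "'a fml set \<Rightarrow> 'a fml set \<Rightarrow> 'a fml set \<Rightarrow> bool" where
  "sensible_pair \<Sigma> \<Phi> \<Psi> \<longleftrightarrow>
     (\<forall>a. Nxt a \<in> \<Sigma> \<longrightarrow> (Nxt a \<in> \<Phi> \<longleftrightarrow> a \<in> \<Psi>)) \<and>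
     (\<forall>a. Prv a \<in> \<Sigma> \<longrightarrow> (Prv a \<in> \<Psi> \<longleftrightarrow> a \<in> \<Phi>)) \<and>
     (\<forall>a. Glob a \<in> \<Sigma> \<longrightarrow> (Glob a \<in> \<Phi> \<longleftrightarrow> a \<in> \<Phi> \<and> Glob a \<in> \<Psi>)) \<and>
     (\<forall>a. Hist a \<in> \<Sigma> \<longrightarrow> (Hist a \<in> \<Psi> \<longleftrightarrow> a \<in> \<Psi> \<and> Hist a \<in> \<Phi>)) \<and>
     (\<forall>a b. Until a b \<in> \<Sigma> \<longrightarrow>
        (Until a b \<in> \<Phi> \<longleftrightarrow> b \<in> \<Phi> \<or> (a \<in> \<Phi> \<and> Until a b \<in> \<Psi>))) \<and>
     (\<forall>a b. Since a b \<in> \<Sigma> \<longrightarrow>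
        (Since a b \<in> \<Psi> \<longleftrightarrow> b \<in> \<Psi> \<or> (a \<in> \<Psi> \<and> Since a b \<in> \<Phi>)))"

definition labelled_system ::
  "'a fml set \<Rightarrow> 'w set \<Rightarrow> ('w \<Rightarrow> 'w \<Rightarrow> bool) \<Rightarrow> ('w \<Rightarrow> 'a fml set)
     \<Rightarrow> ('w \<Rightarrow> 'w \<Rightarrow> bool) \<Rightarrow> bool" where
  "labelled_system \<Sigma> W le lab R \<longleftrightarrow> labelled_space \<Sigma> W le lab \<and>
     (\<forall>x y. R x y \<longrightarrow> x \<in> W \<and> y \<in> W) \<and>
     bi_serial W R \<and> fully_confluent W le R \<and> convex_rel W le R \<and>
     (\<forall>w\<in>W. \<forall>v\<in>W. R w v \<longrightarrow> sensible_pair \<Sigma> (lab w) (lab v))"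

definition Lset :: "'w set \<Rightarrow> ('w \<Rightarrow> 'w \<Rightarrow> bool) \<Rightarrow> ('w \<Rightarrow> 'a fml set) \<Rightarrow> 'w \<Rightarrow> 'a fml set set" where
  "Lset W le lab w = {lab v | v. v \<in> W \<and> comparable le v w}"

definition simrel :: "'w set \<Rightarrow> ('w \<Rightarrow> 'w \<Rightarrow> bool) \<Rightarrow> ('w \<Rightarrow> 'a fml set) \<Rightarrow> 'w rel" where
  "simrel W le lab = {(w, v). w \<in> W \<and> v \<in> W \<and> lab w = lab v \<and>
                               Lset W le lab w = Lset W le lab v}"

definition quotW :: "'w set \<Rightarrow> ('w \<Rightarrow> 'w \<Rightarrow> bool) \<Rightarrow> ('w \<Rightarrow> 'a fml set) \<Rightarrow> 'w set set" where
  "quotW W le lab = W // simrel W le lab"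

text \<open>On classes [w], [v]: L(w) = L(v) and l(w) \<supseteq> l(v) (representative-independent).\<close>
definition quot_le :: "'w set \<Rightarrow> ('w \<Rightarrow> 'w \<Rightarrow> bool) \<Rightarrow> ('w \<Rightarrow> 'a fml set) \<Rightarrow> 'w set \<Rightarrow> 'w set \<Rightarrow> bool" where
  "quot_le W le lab X Y \<longleftrightarrow> (\<exists>w\<in>X. \<exists>v\<in>Y.
      Lset W le lab w = Lset W le lab v \<and> lab v \<subseteq> lab w)"

definition quot_lab :: "('w \<Rightarrow> 'a fml set) \<Rightarrow> 'w set \<Rightarrow> 'a fml set" where
  "quot_lab lab X = lab (SOME w. w \<in> X)"

definition quot_R :: "'w set \<Rightarrow> ('w \<Rightarrow> 'w \<Rightarrow> bool) \<Rightarrow> ('w \<Rightarrow> 'a fml set) \<Rightarrow> ('w \<Rightarrow> 'w \<Rightarrow> bool)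
     \<Rightarrow> 'w set \<Rightarrow> 'w set \<Rightarrow> bool" where
  "quot_R W le lab R X Y \<longleftrightarrow> (\<exists>w v. R w v \<and> X = simrel W le lab `` {w} \<and> Y = simrel W le lab `` {v})"

definition quot_Rplus :: "'w set \<Rightarrow> ('w \<Rightarrow> 'w \<Rightarrow> bool) \<Rightarrow> ('w \<Rightarrow> 'a fml set) \<Rightarrow> ('w \<Rightarrow> 'w \<Rightarrow> bool)
     \<Rightarrow> 'w set \<Rightarrow> 'w set \<Rightarrow> bool" where
  "quot_Rplus W le lab R X Y \<longleftrightarrow> X \<in> quotW W le lab \<and> Y \<in> quotW W le lab \<and>
     (\<exists>X1\<in>quotW W le lab. \<exists>X2\<in>quotW W le lab. \<exists>Y1\<in>quotW W le lab. \<exists>Y2\<in>quotW W le lab.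
        quot_le W le lab X1 X \<and> quot_le W le lab X X2 \<and>
        quot_le W le lab Y1 Y \<and> quot_le W le lab Y Y2 \<and>
        quot_R W le lab R X2 Y1 \<and> quot_R W le lab R X1 Y2)"

end

theory Submission
  imports Defs
begin


definition qle :: "'w set \<Rightarrow> ('w \<Rightarrow> 'w \<Rightarrow> bool) \<Rightarrow> ('w \<Rightarrow> 'a fml set) \<Rightarrow> 'w \<Rightarrow> 'w \<Rightarrow> bool" where
  "qle W le lab a b \<longleftrightarrow> Lset W le lab a = Lset W le lab b \<and> lab b \<subseteq> lab a"

locale lsys =
  fixes \<Sigma> :: "'a fml set" and W :: "'w set" and le R :: "'w \<Rightarrow> 'w \<Rightarrow> bool"
    and lab :: "'w \<Rightarrow> 'a fml set"
  assumes sys: "labelled_system \<Sigma> W le lab R"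
begin

abbreviation "S \<equiv> simrel W le lab"
abbreviation "Lw \<equiv> Lset W le lab"
abbreviation "ql \<equiv> qle W le lab"

lemma space: "labelled_space \<Sigma> W le lab" using sys unfolding labelled_system_def by blast
lemma ll: "locally_linear W le" using space unfolding labelled_space_def by blast
lemma po: "poset_on W le" using ll unfolding locally_linear_def by blast
lemma lrefl: "x \<in> W \<Longrightarrow> le x x" using po unfolding poset_on_def by blast
lemma mono: "w \<in> W \<Longrightarrow> v \<in> W \<Longrightarrow> le w v \<Longrightarrow> lab v \<subseteq> lab w"
  using space unfolding labelled_space_def by blast
lemma types: "w \<in> W \<Longrightarrow> is_type \<Sigma> (lab w)" using space unfolding labelled_space_def by blast
lemma impc: "w \<in> W \<Longrightarrow> Imp a b \<in> \<Sigma> - lab w \<Longrightarrow> \<exists>v\<in>W. le v w \<and> a \<in> lab v \<and> b \<notin> lab v"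
  using space unfolding labelled_space_def by blast
lemma coimpc: "w \<in> W \<Longrightarrow> Coimp a b \<in> lab w \<Longrightarrow> \<exists>v\<in>W. le w v \<and> a \<in> lab v \<and> b \<notin> lab v"
  using space unfolding labelled_space_def by blast
lemma RW: "R x y \<Longrightarrow> x \<in> W \<and> y \<in> W" using sys unfolding labelled_system_def by blast
lemma bis: "bi_serial W R" using sys unfolding labelled_system_def by blast
lemma fc: "fully_confluent W le R" using sys unfolding labelled_system_def by blast
lemma sens: "R w v \<Longrightarrow> sensible_pair \<Sigma> (lab w) (lab v)"
  using sys RW unfolding labelled_system_def by blast

lemma fc1: "le x x' \<Longrightarrow> R x' y' \<Longrightarrow> x \<in> W \<Longrightarrow> \<exists>y\<in>W. R x y \<and> le y y'"
  using fc RW unfolding fully_confluent_def by blast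
lemma fc2: "le x x' \<Longrightarrow> R x y \<Longrightarrow> x' \<in> W \<Longrightarrow> \<exists>y'\<in>W. R x' y' \<and> le y y'"
  using fc RW unfolding fully_confluent_def by blast
lemma fc3: "R x' y' \<Longrightarrow> le y y' \<Longrightarrow> y \<in> W \<Longrightarrow> \<exists>x\<in>W. le x x' \<and> R x y"
  using fc RW unfolding fully_confluent_def by blast
lemma fc4: "R x y \<Longrightarrow> le y y' \<Longrightarrow> y' \<in> W \<Longrightarrow> \<exists>x'\<in>W. le x x' \<and> R x' y'"
  using fc RW unfolding fully_confluent_def by blast

lemma comp_trans:
  assumes "u \<in> W" "v \<in> W" "z \<in> W" "comparable le u v" "comparable le v z"
  shows "comparable le u z"
proof -
  obtain P where P: "partition_on W P" "\<forall>C\<in>P. \<forall>a\<in>C. \<forall>b\<in>C. comparable le a b"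
    "\<forall>C\<in>P. \<forall>D\<in>P. C \<noteq> D \<longrightarrow> (\<forall>a\<in>C. \<forall>b\<in>D. \<not> comparable le a b)"
    using ll unfolding locally_linear_def by blast
  have U: "\<Union>P = W" using P(1) unfolding partition_on_def by blast
  obtain C D E where "C \<in> P" "D \<in> P" "E \<in> P" "u \<in> C" "v \<in> D" "z \<in> E"
    using assms(1-3) U by blast
  then show ?thesis using P(2,3) assms(4,5) by metis
qed

lemma comp_sym: "comparable le a b \<Longrightarrow> comparable le b a" unfolding comparable_def by blast

lemma Lset_eq: "u \<in> W \<Longrightarrow> v \<in> W \<Longrightarrow> comparable le u v \<Longrightarrow> Lw u = Lw v"
  unfolding Lset_def using comp_trans comp_sym by blast

lemma Lset_eq_le: "u \<in> W \<Longrightarrow> v \<in> W \<Longrightarrow> le u v \<Longrightarrow> Lw u = Lw v"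
  using Lset_eq comparable_def by metis

lemma lab_in_L: "u \<in> W \<Longrightarrow> lab u \<in> Lw u"
  unfolding Lset_def comparable_def using lrefl by blast

lemma equivS: "equiv W S"
  unfolding equiv_def refl_on_def sym_def trans_def simrel_def by auto

lemma inS: "(x, y) \<in> S \<longleftrightarrow> x \<in> W \<and> y \<in> W \<and> lab x = lab y \<and> Lw x = Lw y"
  unfolding simrel_def by auto

lemma cls_eq: "x \<in> W \<Longrightarrow> y \<in> W \<Longrightarrow> S``{x} = S``{y} \<longleftrightarrow> lab x = lab y \<and> Lw x = Lw y"
  using eq_equiv_class_iff[OF equivS] inS by blast

lemma qle_le: "a \<in> W \<Longrightarrow> b \<in> W \<Longrightarrow> le a b \<Longrightarrow> ql a b"
  unfolding qle_def using Lset_eq_le mono by blast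
lemma qle_refl: "ql a a" unfolding qle_def by blast
lemma qle_trans: "ql a b \<Longrightarrow> ql b c \<Longrightarrow> ql a c" unfolding qle_def by blast

lemma K2:
  assumes "a \<in> W" "b \<in> W" "ql a b"
  shows "\<exists>a'\<in>W. lab a' = lab a \<and> Lw a' = Lw a \<and> le a' b"
proof -
  have "lab a \<in> Lw b" using assms lab_in_L unfolding qle_def by metis
  then obtain z where z: "z \<in> W" "comparable le z b" "lab z = lab a"
    unfolding Lset_def by blast
  have Lz: "Lw z = Lw a" using Lset_eq[OF z(1) assms(2) z(2)] assms(3) unfolding qle_def by simp
  show ?thesis
  proof (cases "le z b")
    case True then show ?thesis using z Lz by blast
  next
    case False
    then have "le b z" using z(2) unfolding comparable_def by blast
    then have "lab z \<subseteq> lab b" using mono z(1) assms(2) by blast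
    then have "lab b = lab a" using assms(3) z(3) unfolding qle_def by blast
    then show ?thesis using assms lrefl unfolding qle_def by metis
  qed
qed

lemma K3:
  assumes "a \<in> W" "b \<in> W" "ql a b"
  shows "\<exists>b'\<in>W. lab b' = lab b \<and> Lw b' = Lw b \<and> le a b'"
proof -
  have "lab b \<in> Lw a" using assms lab_in_L unfolding qle_def by metis
  then obtain z where z: "z \<in> W" "comparable le z a" "lab z = lab b"
    unfolding Lset_def by blast
  have Lz: "Lw z = Lw b" using Lset_eq[OF z(1) assms(1) z(2)] assms(3) unfolding qle_def by simp
  show ?thesis
  proof (cases "le a z")
    case True then show ?thesis using z Lz by blast
  next
    case False
    then have "le z a" using z(2) unfolding comparable_def by blast
    then have "lab a \<subseteq> lab z" using mono z(1) assms(1) by blast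
    then have "lab b = lab a" using assms(3) z(3) unfolding qle_def by blast
    then show ?thesis using assms lrefl unfolding qle_def by metis
  qed
qed

end



context lsys begin

abbreviation "Q \<equiv> quotW W le lab"

definition Rp where "Rp x y \<longleftrightarrow> (\<exists>w1 w2 v1 v2. R w2 v1 \<and> R w1 v2 \<and> ql w1 x \<and> ql x w2 \<and> ql v1 y \<and> ql y v2)"

lemma Q_intro: "x \<in> W \<Longrightarrow> S``{x} \<in> Q" unfolding quotW_def by (rule quotientI)
lemma Q_elim: "X \<in> Q \<Longrightarrow> \<exists>x\<in>W. X = S``{x}" unfolding quotW_def by (metis quotientE)

lemma in_cls: "x \<in> W \<Longrightarrow> y \<in> S``{x} \<longleftrightarrow> y \<in> W \<and> lab y = lab x \<and> Lw y = Lw x"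
  using inS by auto

lemma quot_le_iff: "x \<in> W \<Longrightarrow> y \<in> W \<Longrightarrow> quot_le W le lab (S``{x}) (S``{y}) \<longleftrightarrow> ql x y"
proof -
  assume x: "x \<in> W" and y: "y \<in> W"
  have xx: "x \<in> S``{x}" "y \<in> S``{y}" using x y inS by auto
  show ?thesis unfolding quot_le_def qle_def
  proof
    assume "\<exists>w\<in>S``{x}. \<exists>v\<in>S``{y}. Lw w = Lw v \<and> lab v \<subseteq> lab w"
    then obtain w v where "w \<in> S``{x}" "v \<in> S``{y}" "Lw w = Lw v" "lab v \<subseteq> lab w" by blast
    then show "Lw x = Lw y \<and> lab y \<subseteq> lab x" using in_cls[OF x] in_cls[OF y] by metis
  next
    assume "Lw x = Lw y \<and> lab y \<subseteq> lab x"
    then show "\<exists>w\<in>S``{x}. \<exists>v\<in>S``{y}. Lw w = Lw v \<and> lab v \<subseteq> lab w" using xx by blast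
  qed
qed

lemma quot_lab_cls: "x \<in> W \<Longrightarrow> quot_lab lab (S``{x}) = lab x"
proof -
  assume x: "x \<in> W"
  have "x \<in> S``{x}" using x inS by auto
  then have "(SOME w. w \<in> S``{x}) \<in> S``{x}" by (rule someI)
  then show ?thesis unfolding quot_lab_def using in_cls x by blast
qed

lemma cls_ql: "x \<in> W \<Longrightarrow> y \<in> W \<Longrightarrow> S``{x} = S``{y} \<Longrightarrow> ql x y \<and> ql y x"
  using cls_eq unfolding qle_def by simp

lemma ql_cong: "lab a = lab a' \<Longrightarrow> Lw a = Lw a' \<Longrightarrow> ql a b = ql a' b \<and> ql b a = ql b a'"
  unfolding qle_def by simp

lemma Rplus_iff: "x \<in> W \<Longrightarrow> y \<in> W \<Longrightarrow> quot_Rplus W le lab R (S``{x}) (S``{y}) \<longleftrightarrow> Rp x y"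
proof
  assume x: "x \<in> W" and y: "y \<in> W" and "quot_Rplus W le lab R (S``{x}) (S``{y})"
  then obtain X1 X2 Y1 Y2 where XY: "X1 \<in> Q" "X2 \<in> Q" "Y1 \<in> Q" "Y2 \<in> Q"
    "quot_le W le lab X1 (S``{x})" "quot_le W le lab (S``{x}) X2"
    "quot_le W le lab Y1 (S``{y})" "quot_le W le lab (S``{y}) Y2"
    "quot_R W le lab R X2 Y1" "quot_R W le lab R X1 Y2"
    unfolding quot_Rplus_def by blast
  obtain w2 v1 where a: "R w2 v1" "X2 = S``{w2}" "Y1 = S``{v1}" using XY(9) unfolding quot_R_def by blast
  obtain w1 v2 where b: "R w1 v2" "X1 = S``{w1}" "Y2 = S``{v2}" using XY(10) unfolding quot_R_def by blast
  have W: "w1 \<in> W" "w2 \<in> W" "v1 \<in> W" "v2 \<in> W" using a b RW by auto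
  show "Rp x y" unfolding Rp_def
    using a(1) b(1) XY(5-8) unfolding a(2,3) b(2,3) using quot_le_iff W x y by blast
next
  assume x: "x \<in> W" and y: "y \<in> W" and "Rp x y"
  then obtain w1 w2 v1 v2 where r: "R w2 v1" "R w1 v2" "ql w1 x" "ql x w2" "ql v1 y" "ql y v2"
    unfolding Rp_def by blast
  have W: "w1 \<in> W" "w2 \<in> W" "v1 \<in> W" "v2 \<in> W" using r RW by auto
  show "quot_Rplus W le lab R (S``{x}) (S``{y})" unfolding quot_Rplus_def
    apply (intro conjI Q_intro x y)
    apply (rule bexI[of _ "S``{w1}"], rule bexI[of _ "S``{w2}"], rule bexI[of _ "S``{v1}"], rule bexI[of _ "S``{v2}"])
    using r W x y quot_le_iff Q_intro unfolding quot_R_def by blast+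
qed

lemma Rp_R: "R x y \<Longrightarrow> Rp x y" unfolding Rp_def using qle_refl by blast

lemma fc1Q: "x \<in> W \<Longrightarrow> x' \<in> W \<Longrightarrow> ql x x' \<Longrightarrow> Rp x' y' \<Longrightarrow> \<exists>y\<in>W. Rp x y \<and> ql y y'"
proof -
  assume x: "x \<in> W" "x' \<in> W" "ql x x'" "Rp x' y'"
  then obtain w1 w2 v1 v2 where r: "R w2 v1" "R w1 v2" "ql w1 x'" "ql x' w2" "ql v1 y'" "ql y' v2"
    unfolding Rp_def by blast
  have W: "w1 \<in> W" "w2 \<in> W" "v1 \<in> W" "v2 \<in> W" using r RW by auto
  obtain x0 where x0: "x0 \<in> W" "lab x0 = lab x" "Lw x0 = Lw x" "le x0 w2"
    using K2[OF x(1) W(2) qle_trans[OF x(3) r(4)]] by blast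
  obtain y where y: "y \<in> W" "R x0 y" "le y v1" using fc1[OF x0(4) r(1) x0(1)] by blast
  have "Rp x y" unfolding Rp_def using y(2) qle_refl ql_cong[OF x0(2,3)] by metis
  moreover have "ql y y'" using qle_trans[OF qle_le[OF y(1) W(3) y(3)] r(5)] .
  ultimately show ?thesis using y(1) by blast
qed

lemma fc2Q: "x \<in> W \<Longrightarrow> x' \<in> W \<Longrightarrow> ql x x' \<Longrightarrow> Rp x y \<Longrightarrow> \<exists>y'\<in>W. Rp x' y' \<and> ql y y'"
proof -
  assume x: "x \<in> W" "x' \<in> W" "ql x x'" "Rp x y"
  then obtain w1 w2 v1 v2 where r: "R w2 v1" "R w1 v2" "ql w1 x" "ql x w2" "ql v1 y" "ql y v2"
    unfolding Rp_def by blast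
  have W: "w1 \<in> W" "w2 \<in> W" "v1 \<in> W" "v2 \<in> W" using r RW by auto
  obtain x0 where x0: "x0 \<in> W" "lab x0 = lab x'" "Lw x0 = Lw x'" "le w1 x0"
    using K3[OF W(1) x(2) qle_trans[OF r(3) x(3)]] by blast
  obtain y' where y: "y' \<in> W" "R x0 y'" "le v2 y'" using fc2[OF x0(4) r(2) x0(1)] by blast
  have "Rp x' y'" unfolding Rp_def using y(2) qle_refl ql_cong[OF x0(2,3)] by metis
  moreover have "ql y y'" using qle_trans[OF r(6) qle_le[OF W(4) y(1) y(3)]] .
  ultimately show ?thesis using y(1) by blast
qed

lemma fc3Q: "y \<in> W \<Longrightarrow> y' \<in> W \<Longrightarrow> ql y y' \<Longrightarrow> Rp x' y' \<Longrightarrow> \<exists>x\<in>W. ql x x' \<and> Rp x y"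
proof -
  assume x: "y \<in> W" "y' \<in> W" "ql y y'" "Rp x' y'"
  then obtain w1 w2 v1 v2 where r: "R w2 v1" "R w1 v2" "ql w1 x'" "ql x' w2" "ql v1 y'" "ql y' v2"
    unfolding Rp_def by blast
  have W: "w1 \<in> W" "w2 \<in> W" "v1 \<in> W" "v2 \<in> W" using r RW by auto
  obtain y0 where y0: "y0 \<in> W" "lab y0 = lab y" "Lw y0 = Lw y" "le y0 v2"
    using K2[OF x(1) W(4) qle_trans[OF x(3) r(6)]] by blast
  obtain x0 where y: "x0 \<in> W" "le x0 w1" "R x0 y0" using fc3[OF r(2) y0(4) y0(1)] by blast
  have "Rp x0 y" unfolding Rp_def using y(3) qle_refl ql_cong[OF y0(2,3)] by metis
  moreover have "ql x0 x'" using qle_trans[OF qle_le[OF y(1) W(1) y(2)] r(3)] .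
  ultimately show ?thesis using y(1) by blast
qed

lemma fc4Q: "y \<in> W \<Longrightarrow> y' \<in> W \<Longrightarrow> ql y y' \<Longrightarrow> Rp x y \<Longrightarrow> \<exists>x'\<in>W. ql x x' \<and> Rp x' y'"
proof -
  assume x: "y \<in> W" "y' \<in> W" "ql y y'" "Rp x y"
  then obtain w1 w2 v1 v2 where r: "R w2 v1" "R w1 v2" "ql w1 x" "ql x w2" "ql v1 y" "ql y v2"
    unfolding Rp_def by blast
  have W: "w1 \<in> W" "w2 \<in> W" "v1 \<in> W" "v2 \<in> W" using r RW by auto
  obtain y0 where y0: "y0 \<in> W" "lab y0 = lab y'" "Lw y0 = Lw y'" "le v1 y0"
    using K3[OF W(3) x(2) qle_trans[OF r(5) x(3)]] by blast
  obtain x0 where y: "x0 \<in> W" "le w2 x0" "R x0 y0" using fc4[OF r(1) y0(4) y0(1)] by blast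
  have "Rp x0 y'" unfolding Rp_def using y(3) qle_refl ql_cong[OF y0(2,3)] by metis
  moreover have "ql x x0" using qle_trans[OF r(4) qle_le[OF W(2) y(1) y(2)]] .
  ultimately show ?thesis using y(1) by blast
qed

lemma conv1: "Rp x ya \<Longrightarrow> Rp x yb \<Longrightarrow> ql ya z \<Longrightarrow> ql z yb \<Longrightarrow> Rp x z"
  unfolding Rp_def using qle_trans by meson
lemma conv2: "Rp xa y \<Longrightarrow> Rp xb y \<Longrightarrow> ql xa z \<Longrightarrow> ql z xb \<Longrightarrow> Rp z y"
  unfolding Rp_def using qle_trans by meson

end



lemma sp_nxt: "sensible_pair \<Sigma> A B \<Longrightarrow> Nxt a \<in> \<Sigma> \<Longrightarrow> (Nxt a \<in> A \<longleftrightarrow> a \<in> B)"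
  unfolding sensible_pair_def by simp
lemma sp_prv: "sensible_pair \<Sigma> A B \<Longrightarrow> Prv a \<in> \<Sigma> \<Longrightarrow> (Prv a \<in> B \<longleftrightarrow> a \<in> A)"
  unfolding sensible_pair_def by simp
lemma sp_glob: "sensible_pair \<Sigma> A B \<Longrightarrow> Glob a \<in> \<Sigma> \<Longrightarrow> (Glob a \<in> A \<longleftrightarrow> a \<in> A \<and> Glob a \<in> B)"
  unfolding sensible_pair_def by simp
lemma sp_hist: "sensible_pair \<Sigma> A B \<Longrightarrow> Hist a \<in> \<Sigma> \<Longrightarrow> (Hist a \<in> B \<longleftrightarrow> a \<in> B \<and> Hist a \<in> A)"
  unfolding sensible_pair_def by simp
lemma sp_until: "sensible_pair \<Sigma> A B \<Longrightarrow> Until a b \<in> \<Sigma> \<Longrightarrow> (Until a b \<in> A \<longleftrightarrow> b \<in> A \<or> (a \<in> A \<and> Until a b \<in> B))"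
  unfolding sensible_pair_def by simp
lemma sp_since: "sensible_pair \<Sigma> A B \<Longrightarrow> Since a b \<in> \<Sigma> \<Longrightarrow> (Since a b \<in> B \<longleftrightarrow> b \<in> B \<or> (a \<in> B \<and> Since a b \<in> A))"
  unfolding sensible_pair_def by simp

lemma sens_comb:
  assumes "sensible_pair \<Sigma> A B1" "B \<subseteq> B1" "sensible_pair \<Sigma> A2 B" "A2 \<subseteq> A"
    "sensible_pair \<Sigma> A3 B" "A \<subseteq> A3" "sensible_pair \<Sigma> A B4" "B4 \<subseteq> B"
  shows "sensible_pair \<Sigma> A B"
proof -
  show ?thesis unfolding sensible_pair_def
  proof (intro conjI allI impI)
    fix a assume h: "Nxt a \<in> \<Sigma>"
    have "Nxt a \<in> A \<longleftrightarrow> a \<in> B1" "Nxt a \<in> A3 \<longleftrightarrow> a \<in> B" "Nxt a \<in> A \<longleftrightarrow> a \<in> B4"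
      using sp_nxt[OF assms(1) h] sp_nxt[OF assms(5) h] sp_nxt[OF assms(7) h] by blast+
    then show "Nxt a \<in> A \<longleftrightarrow> a \<in> B" using assms(2,6,8) by blast
  next
    fix a assume h: "Prv a \<in> \<Sigma>"
    have "Prv a \<in> B1 \<longleftrightarrow> a \<in> A" "Prv a \<in> B \<longleftrightarrow> a \<in> A3" "Prv a \<in> B \<longleftrightarrow> a \<in> A2"
      using sp_prv[OF assms(1) h] sp_prv[OF assms(5) h] sp_prv[OF assms(3) h] by blast+
    then show "Prv a \<in> B \<longleftrightarrow> a \<in> A" using assms(2,4,6) by blast
  next
    fix a assume h: "Glob a \<in> \<Sigma>"
    have "Glob a \<in> A \<longleftrightarrow> a \<in> A \<and> Glob a \<in> B1" "Glob a \<in> A3 \<longleftrightarrow> a \<in> A3 \<and> Glob a \<in> B"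
      "Glob a \<in> A \<longleftrightarrow> a \<in> A \<and> Glob a \<in> B4"
      using sp_glob[OF assms(1) h] sp_glob[OF assms(5) h] sp_glob[OF assms(7) h] by blast+
    then show "Glob a \<in> A \<longleftrightarrow> a \<in> A \<and> Glob a \<in> B" using assms(2,6,8) by blast
  next
    fix a assume h: "Hist a \<in> \<Sigma>"
    have "Hist a \<in> B1 \<longleftrightarrow> a \<in> B1 \<and> Hist a \<in> A" "Hist a \<in> B \<longleftrightarrow> a \<in> B \<and> Hist a \<in> A3"
      "Hist a \<in> B \<longleftrightarrow> a \<in> B \<and> Hist a \<in> A2"
      using sp_hist[OF assms(1) h] sp_hist[OF assms(5) h] sp_hist[OF assms(3) h] by blast+
    then show "Hist a \<in> B \<longleftrightarrow> a \<in> B \<and> Hist a \<in> A" using assms(2,4,6) by blast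
  next
    fix a b assume h: "Until a b \<in> \<Sigma>"
    have "Until a b \<in> A \<longleftrightarrow> b \<in> A \<or> (a \<in> A \<and> Until a b \<in> B1)"
      "Until a b \<in> A \<longleftrightarrow> b \<in> A \<or> (a \<in> A \<and> Until a b \<in> B4)"
      using sp_until[OF assms(1) h] sp_until[OF assms(7) h] by blast+
    then show "Until a b \<in> A \<longleftrightarrow> b \<in> A \<or> (a \<in> A \<and> Until a b \<in> B)" using assms(2,8) by blast
  next
    fix a b assume h: "Since a b \<in> \<Sigma>"
    have "Since a b \<in> B \<longleftrightarrow> b \<in> B \<or> (a \<in> B \<and> Since a b \<in> A3)"
      "Since a b \<in> B \<longleftrightarrow> b \<in> B \<or> (a \<in> B \<and> Since a b \<in> A2)"
      using sp_since[OF assms(5) h] sp_since[OF assms(3) h] by blast+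
    then show "Since a b \<in> B \<longleftrightarrow> b \<in> B \<or> (a \<in> B \<and> Since a b \<in> A)" using assms(4,6) by blast
  qed
qed



context lsys begin

lemma Rp_sens:
  assumes x: "x \<in> W" and y: "y \<in> W" and "Rp x y"
  shows "sensible_pair \<Sigma> (lab x) (lab y)"
proof -
  obtain w1 w2 v1 v2 where r: "R w2 v1" "R w1 v2" "ql w1 x" "ql x w2" "ql v1 y" "ql y v2"
    using assms(3) unfolding Rp_def by blast
  have W: "w1 \<in> W" "w2 \<in> W" "v1 \<in> W" "v2 \<in> W" using r RW by auto
  obtain x' where x': "x' \<in> W" "lab x' = lab x" "Lw x' = Lw x" "le x' w2"
    using K2[OF x W(2) r(4)] by blast
  obtain y'' where y'': "y'' \<in> W" "R x' y''" "le y'' v1" using fc1[OF x'(4) r(1) x'(1)] by blast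
  have P1: "sensible_pair \<Sigma> (lab x) (lab y'')" using sens[OF y''(2)] x'(2) by simp
  have s1: "lab y \<subseteq> lab y''" using mono[OF y''(1) W(3) y''(3)] r(5) unfolding qle_def by blast
  have q: "ql y'' y" using qle_trans[OF qle_le[OF y''(1) W(3) y''(3)] r(5)] .
  obtain ys where ys: "ys \<in> W" "lab ys = lab y" "Lw ys = Lw y" "le y'' ys"
    using K3[OF y''(1) y q] by blast
  obtain xs where xs: "xs \<in> W" "le x' xs" "R xs ys" using fc4[OF y''(2) ys(4) ys(1)] by blast
  have P2: "sensible_pair \<Sigma> (lab xs) (lab y)" using sens[OF xs(3)] ys(2) by simp
  have s2: "lab xs \<subseteq> lab x" using mono[OF x'(1) xs(1) xs(2)] x'(2) by simp
  obtain yo where yo: "yo \<in> W" "lab yo = lab y" "Lw yo = Lw y" "le yo v2"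
    using K2[OF y W(4) r(6)] by blast
  obtain x3 where x3: "x3 \<in> W" "le x3 w1" "R x3 yo" using fc3[OF r(2) yo(4) yo(1)] by blast
  have P3: "sensible_pair \<Sigma> (lab x3) (lab y)" using sens[OF x3(3)] yo(2) by simp
  have s3: "lab x \<subseteq> lab x3" using mono[OF x3(1) W(1) x3(2)] r(3) unfolding qle_def by blast
  have q3: "ql x3 x" using qle_trans[OF qle_le[OF x3(1) W(1) x3(2)] r(3)] .
  obtain x0 where x0: "x0 \<in> W" "lab x0 = lab x" "Lw x0 = Lw x" "le x3 x0"
    using K3[OF x3(1) x q3] by blast
  obtain ys' where ys': "ys' \<in> W" "R x0 ys'" "le yo ys'" using fc2[OF x0(4) x3(3) x0(1)] by blast
  have P4: "sensible_pair \<Sigma> (lab x) (lab ys')" using sens[OF ys'(2)] x0(2) by simp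
  have s4: "lab ys' \<subseteq> lab y" using mono[OF yo(1) ys'(1) ys'(3)] yo(2) by simp
  show ?thesis using sens_comb[OF P1 s1 P2 s2 P3 s3 P4 s4] .
qed

lemma K1: "x \<in> W \<Longrightarrow> y \<in> W \<Longrightarrow> Lw x = Lw y \<Longrightarrow> lab x \<subseteq> lab y \<or> lab y \<subseteq> lab x"
proof -
  assume x: "x \<in> W" and y: "y \<in> W" and L: "Lw x = Lw y"
  have "lab y \<in> Lw x" using L lab_in_L[OF y] by simp
  then obtain z where z: "z \<in> W" "comparable le z x" "lab z = lab y" unfolding Lset_def by blast
  then show ?thesis
  proof (cases "le z x")
    case True then show ?thesis using mono[OF z(1) x] z(3) by blast
  next
    case False then have "le x z" using z(2) unfolding comparable_def by blast
    then show ?thesis using mono[OF x z(1)] z(3) by blast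
  qed
qed

definition LQ where "LQ X = Lw (SOME w. w \<in> X)"

lemma LQ_cls: "x \<in> W \<Longrightarrow> LQ (S``{x}) = Lw x"
proof -
  assume x: "x \<in> W"
  have "x \<in> S``{x}" using x inS by auto
  then have "(SOME w. w \<in> S``{x}) \<in> S``{x}" by (rule someI)
  then show ?thesis unfolding LQ_def using in_cls x by blast
qed

lemma Qall: "(\<And>x. x \<in> W \<Longrightarrow> P (S``{x})) \<Longrightarrow> X \<in> Q \<Longrightarrow> P X"
  using Q_elim by blast

end


context lsys begin
lemma qll: "locally_linear Q (quot_le W le lab)"
proof -
  have po: "poset_on Q (quot_le W le lab)"
    unfolding poset_on_def
  proof (intro conjI ballI impI)
    fix X assume XQ: "X \<in> Q"
    obtain x where x: "x \<in> W" "X = S``{x}" using Q_elim[OF XQ] by blast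
    have "quot_le W le lab (S``{x}) (S``{x})" using quot_le_iff[OF x(1) x(1)] qle_refl by blast
    then show "quot_le W le lab X X" using x(2) by simp
  next
    fix X Y assume XY: "X \<in> Q" "Y \<in> Q" "quot_le W le lab X Y \<and> quot_le W le lab Y X"
    obtain x where x: "x \<in> W" "X = S``{x}" using Q_elim[OF XY(1)] by blast
    obtain y where y: "y \<in> W" "Y = S``{y}" using Q_elim[OF XY(2)] by blast
    have "quot_le W le lab (S``{x}) (S``{y}) \<and> quot_le W le lab (S``{y}) (S``{x})" using XY(3) x(2) y(2) by simp
    then have "ql x y \<and> ql y x" using quot_le_iff[OF x(1) y(1)] quot_le_iff[OF y(1) x(1)] by blast
    then have "lab x = lab y \<and> Lw x = Lw y" unfolding qle_def by blast
    then have "S``{x} = S``{y}" using cls_eq[OF x(1) y(1)] by blast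
    then show "X = Y" using x(2) y(2) by simp
  next
    fix X Y Z assume XY: "X \<in> Q" "Y \<in> Q" "Z \<in> Q" "quot_le W le lab X Y \<and> quot_le W le lab Y Z"
    obtain x where x: "x \<in> W" "X = S``{x}" using Q_elim[OF XY(1)] by blast
    obtain y where y: "y \<in> W" "Y = S``{y}" using Q_elim[OF XY(2)] by blast
    obtain z where z: "z \<in> W" "Z = S``{z}" using Q_elim[OF XY(3)] by blast
    have "quot_le W le lab (S``{x}) (S``{y}) \<and> quot_le W le lab (S``{y}) (S``{z})" using XY(4) x(2) y(2) z(2) by simp
    then have "ql x y \<and> ql y z" using quot_le_iff[OF x(1) y(1)] quot_le_iff[OF y(1) z(1)] by blast
    then have "ql x z" using qle_trans by blast
    then have "quot_le W le lab (S``{x}) (S``{z})" using quot_le_iff[OF x(1) z(1)] by blast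
    then show "quot_le W le lab X Z" using x(2) z(2) by simp
  qed
  define E where "E = {(X, Y). X \<in> Q \<and> Y \<in> Q \<and> LQ X = LQ Y}"
  have eq: "equiv Q E" unfolding E_def equiv_def refl_on_def sym_def trans_def by auto
  have cmp: "comparable (quot_le W le lab) X Y" if h: "X \<in> Q" "Y \<in> Q" "LQ X = LQ Y" for X Y
  proof -
    obtain x where x: "x \<in> W" "X = S``{x}" using Q_elim[OF h(1)] by blast
    obtain y where y: "y \<in> W" "Y = S``{y}" using Q_elim[OF h(2)] by blast
    have L: "Lw x = Lw y" using h(3) LQ_cls x y by simp
    have "ql x y \<or> ql y x" using K1[OF x(1) y(1) L] L unfolding qle_def by blast
    then have "quot_le W le lab (S``{x}) (S``{y}) \<or> quot_le W le lab (S``{y}) (S``{x})"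
      using quot_le_iff[OF x(1) y(1)] quot_le_iff[OF y(1) x(1)] by blast
    then show ?thesis unfolding comparable_def using x(2) y(2) by simp
  qed
  have cmpE: "LQ X = LQ Y" if h: "X \<in> Q" "Y \<in> Q" "comparable (quot_le W le lab) X Y" for X Y
  proof -
    obtain x where x: "x \<in> W" "X = S``{x}" using Q_elim[OF h(1)] by blast
    obtain y where y: "y \<in> W" "Y = S``{y}" using Q_elim[OF h(2)] by blast
    have "quot_le W le lab (S``{x}) (S``{y}) \<or> quot_le W le lab (S``{y}) (S``{x})"
      using h(3) x(2) y(2) unfolding comparable_def by simp
    then have "ql x y \<or> ql y x" using quot_le_iff[OF x(1) y(1)] quot_le_iff[OF y(1) x(1)] by blast
    then show ?thesis using LQ_cls x y unfolding qle_def by (auto simp del: Image_singleton_iff)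
  qed
  have p1: "partition_on Q (Q // E)" using partition_on_quotient[OF eq] .
  have p2: "\<forall>C\<in>Q // E. \<forall>a\<in>C. \<forall>b\<in>C. comparable (quot_le W le lab) a b"
  proof (intro ballI)
    fix C a b assume C: "C \<in> Q // E" "a \<in> C" "b \<in> C"
    then have "(a, b) \<in> E" using quotient_eq_iff[OF eq C(1) C(1) C(2) C(3)] by simp
    then show "comparable (quot_le W le lab) a b" using cmp unfolding E_def by blast
  qed
  have p3: "\<forall>C\<in>Q // E. \<forall>D\<in>Q // E. C \<noteq> D \<longrightarrow> (\<forall>a\<in>C. \<forall>b\<in>D. \<not> comparable (quot_le W le lab) a b)"
  proof (intro ballI impI notI)
    fix C D a b assume CD: "C \<in> Q // E" "D \<in> Q // E" "C \<noteq> D" "a \<in> C" "b \<in> D"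
      "comparable (quot_le W le lab) a b"
    have "a \<in> Q" "b \<in> Q" using CD Union_quotient[OF eq] by blast+
    then have "(a, b) \<in> E" using cmpE CD(6) unfolding E_def by blast
    then show False using quotient_eq_iff[OF eq CD(1,2,4,5)] CD(3) by blast
  qed
  show ?thesis unfolding locally_linear_def
    by (intro conjI po exI[of _ "Q // E"] p1 p2 p3)
qed

end


context lsys begin

abbreviation "QL \<equiv> quot_le W le lab"
abbreviation "QR \<equiv> quot_Rplus W le lab R"

lemma qspace: "labelled_space \<Sigma> Q QL (quot_lab lab)"
  unfolding labelled_space_def
proof (intro conjI qll ballI allI impI)
  fix X assume XQ: "X \<in> Q"
  obtain x where x: "x \<in> W" "X = S``{x}" using Q_elim[OF XQ] by blast
  show "is_type \<Sigma> (quot_lab lab X)" using types[OF x(1)] quot_lab_cls[OF x(1)] x(2) by simp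
next
  fix X Y assume XQ: "X \<in> Q" "Y \<in> Q" and le: "QL X Y"
  obtain x where x: "x \<in> W" "X = S``{x}" using Q_elim[OF XQ(1)] by blast
  obtain y where y: "y \<in> W" "Y = S``{y}" using Q_elim[OF XQ(2)] by blast
  have "QL (S``{x}) (S``{y})" using le x(2) y(2) by simp
  then have "ql x y" using quot_le_iff[OF x(1) y(1)] by blast
  then have "lab y \<subseteq> lab x" unfolding qle_def by blast
  then show "quot_lab lab Y \<subseteq> quot_lab lab X" using quot_lab_cls[OF x(1)] quot_lab_cls[OF y(1)] x(2) y(2) by simp
next
  fix X a b assume XQ: "X \<in> Q" and h: "Imp a b \<in> \<Sigma> - quot_lab lab X"
  obtain x where x: "x \<in> W" "X = S``{x}" using Q_elim[OF XQ] by blast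
  have "Imp a b \<in> \<Sigma> - lab x" using h quot_lab_cls[OF x(1)] x(2) by simp
  then obtain v where v: "v \<in> W" "le v x" "a \<in> lab v" "b \<notin> lab v" using impc[OF x(1)] by blast
  have "ql v x" using qle_le[OF v(1) x(1) v(2)] .
  then have "QL (S``{v}) X" using quot_le_iff[OF v(1) x(1)] x(2) by simp
  then show "\<exists>V\<in>Q. QL V X \<and> a \<in> quot_lab lab V \<and> b \<notin> quot_lab lab V"
    using Q_intro[OF v(1)] quot_lab_cls[OF v(1)] v(3,4) by auto
next
  fix X a b assume XQ: "X \<in> Q" and h: "Coimp a b \<in> quot_lab lab X"
  obtain x where x: "x \<in> W" "X = S``{x}" using Q_elim[OF XQ] by blast
  have "Coimp a b \<in> lab x" using h quot_lab_cls[OF x(1)] x(2) by simp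
  then obtain v where v: "v \<in> W" "le x v" "a \<in> lab v" "b \<notin> lab v" using coimpc[OF x(1)] by blast
  have "ql x v" using qle_le[OF x(1) v(1) v(2)] .
  then have "QL X (S``{v})" using quot_le_iff[OF x(1) v(1)] x(2) by simp
  then show "\<exists>V\<in>Q. QL X V \<and> a \<in> quot_lab lab V \<and> b \<notin> quot_lab lab V"
    using Q_intro[OF v(1)] quot_lab_cls[OF v(1)] v(3,4) by auto
qed

lemma QR_iff: "x \<in> W \<Longrightarrow> y \<in> W \<Longrightarrow> X = S``{x} \<Longrightarrow> Y = S``{y} \<Longrightarrow> QR X Y \<longleftrightarrow> Rp x y"
  using Rplus_iff by simp
lemma QL_iff: "x \<in> W \<Longrightarrow> y \<in> W \<Longrightarrow> X = S``{x} \<Longrightarrow> Y = S``{y} \<Longrightarrow> QL X Y \<longleftrightarrow> ql x y"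
  using quot_le_iff by simp

lemma qsys: "labelled_system \<Sigma> Q QL (quot_lab lab) QR"
  unfolding labelled_system_def
proof (intro conjI qspace)
  show "\<forall>X Y. QR X Y \<longrightarrow> X \<in> Q \<and> Y \<in> Q" unfolding quot_Rplus_def by blast
next
  show "bi_serial Q QR" unfolding bi_serial_def
  proof (intro ballI conjI)
    fix X assume XQ: "X \<in> Q"
    obtain x where x: "x \<in> W" "X = S``{x}" using Q_elim[OF XQ] by blast
    obtain y where y: "y \<in> W" "R x y" using bis x(1) unfolding bi_serial_def by blast
    obtain z where z: "z \<in> W" "R z x" using bis x(1) unfolding bi_serial_def by blast
    show "\<exists>Y\<in>Q. QR X Y" using Q_intro[OF y(1)] QR_iff[OF x(1) y(1) x(2) refl] Rp_R[OF y(2)] by blast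
    show "\<exists>Y\<in>Q. QR Y X" using Q_intro[OF z(1)] QR_iff[OF z(1) x(1) refl x(2)] Rp_R[OF z(2)] by blast
  qed
next
  show "fully_confluent Q QL QR" unfolding fully_confluent_def
  proof (intro conjI ballI impI)
    fix X X' Y' assume Q: "X \<in> Q" "X' \<in> Q" "Y' \<in> Q" and h: "QL X X' \<and> QR X' Y'"
    obtain x where x: "x \<in> W" "X = S``{x}" using Q_elim[OF Q(1)] by blast
    obtain x' where x': "x' \<in> W" "X' = S``{x'}" using Q_elim[OF Q(2)] by blast
    obtain y' where y': "y' \<in> W" "Y' = S``{y'}" using Q_elim[OF Q(3)] by blast
    have "ql x x'" "Rp x' y'" using h QL_iff[OF x(1) x'(1) x(2) x'(2)] QR_iff[OF x'(1) y'(1) x'(2) y'(2)] by auto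
    then obtain y where y: "y \<in> W" "Rp x y" "ql y y'" using fc1Q[OF x(1) x'(1)] by blast
    show "\<exists>Y\<in>Q. QR X Y \<and> QL Y Y'"
      using Q_intro[OF y(1)] y QR_iff[OF x(1) y(1) x(2) refl] QL_iff[OF y(1) y'(1) refl y'(2)] by blast
  next
    fix X X' Y assume Q: "X \<in> Q" "X' \<in> Q" "Y \<in> Q" and h: "QL X X' \<and> QR X Y"
    obtain x where x: "x \<in> W" "X = S``{x}" using Q_elim[OF Q(1)] by blast
    obtain x' where x': "x' \<in> W" "X' = S``{x'}" using Q_elim[OF Q(2)] by blast
    obtain y where y: "y \<in> W" "Y = S``{y}" using Q_elim[OF Q(3)] by blast
    have "ql x x'" "Rp x y" using h QL_iff[OF x(1) x'(1) x(2) x'(2)] QR_iff[OF x(1) y(1) x(2) y(2)] by auto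
    then obtain y' where y': "y' \<in> W" "Rp x' y'" "ql y y'" using fc2Q[OF x(1) x'(1)] by blast
    show "\<exists>Y'\<in>Q. QR X' Y' \<and> QL Y Y'"
      using Q_intro[OF y'(1)] y' QR_iff[OF x'(1) y'(1) x'(2) refl] QL_iff[OF y(1) y'(1) y(2) refl] by blast
  next
    fix X' Y' Y assume Q: "X' \<in> Q" "Y' \<in> Q" "Y \<in> Q" and h: "QR X' Y' \<and> QL Y Y'"
    obtain x' where x': "x' \<in> W" "X' = S``{x'}" using Q_elim[OF Q(1)] by blast
    obtain y' where y': "y' \<in> W" "Y' = S``{y'}" using Q_elim[OF Q(2)] by blast
    obtain y where y: "y \<in> W" "Y = S``{y}" using Q_elim[OF Q(3)] by blast
    have "ql y y'" "Rp x' y'" using h QL_iff[OF y(1) y'(1) y(2) y'(2)] QR_iff[OF x'(1) y'(1) x'(2) y'(2)] by auto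
    then obtain x where x: "x \<in> W" "ql x x'" "Rp x y" using fc3Q[OF y(1) y'(1)] by blast
    show "\<exists>X\<in>Q. QL X X' \<and> QR X Y"
      using Q_intro[OF x(1)] x QR_iff[OF x(1) y(1) refl y(2)] QL_iff[OF x(1) x'(1) refl x'(2)] by blast
  next
    fix X Y Y' assume Q: "X \<in> Q" "Y \<in> Q" "Y' \<in> Q" and h: "QR X Y \<and> QL Y Y'"
    obtain x where x: "x \<in> W" "X = S``{x}" using Q_elim[OF Q(1)] by blast
    obtain y where y: "y \<in> W" "Y = S``{y}" using Q_elim[OF Q(2)] by blast
    obtain y' where y': "y' \<in> W" "Y' = S``{y'}" using Q_elim[OF Q(3)] by blast
    have "ql y y'" "Rp x y" using h QL_iff[OF y(1) y'(1) y(2) y'(2)] QR_iff[OF x(1) y(1) x(2) y(2)] by auto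
    then obtain x' where x': "x' \<in> W" "ql x x'" "Rp x' y'" using fc4Q[OF y(1) y'(1)] by blast
    show "\<exists>X'\<in>Q. QL X X' \<and> QR X' Y'"
      using Q_intro[OF x'(1)] x' QR_iff[OF x'(1) y'(1) refl y'(2)] QL_iff[OF x(1) x'(1) x(2) refl] by blast
  qed
next
  show "convex_rel Q QL QR" unfolding convex_rel_def convex_set_def
  proof (intro ballI conjI impI)
    fix X A B C assume Q: "X \<in> Q" "C \<in> Q" and A: "A \<in> {Y \<in> Q. QR X Y}" and B: "B \<in> {Y \<in> Q. QR X Y}"
      and h: "QL A C \<and> QL C B"
    obtain x where x: "x \<in> W" "X = S``{x}" using Q_elim[OF Q(1)] by blast
    obtain c where c: "c \<in> W" "C = S``{c}" using Q_elim[OF Q(2)] by blast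
    obtain a where a: "a \<in> W" "A = S``{a}" using Q_elim A by blast
    obtain b where b: "b \<in> W" "B = S``{b}" using Q_elim B by blast
    have "Rp x a" "Rp x b" using A B QR_iff[OF x(1) a(1) x(2) a(2)] QR_iff[OF x(1) b(1) x(2) b(2)] by auto
    moreover have "ql a c" "ql c b" using h QL_iff[OF a(1) c(1) a(2) c(2)] QL_iff[OF c(1) b(1) c(2) b(2)] by auto
    ultimately have "Rp x c" using conv1 by blast
    then show "C \<in> {Y \<in> Q. QR X Y}" using Q(2) QR_iff[OF x(1) c(1) x(2) c(2)] by blast
  next
    fix X A B C assume Q: "X \<in> Q" "C \<in> Q" and A: "A \<in> {Y \<in> Q. QR Y X}" and B: "B \<in> {Y \<in> Q. QR Y X}"
      and h: "QL A C \<and> QL C B"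
    obtain x where x: "x \<in> W" "X = S``{x}" using Q_elim[OF Q(1)] by blast
    obtain c where c: "c \<in> W" "C = S``{c}" using Q_elim[OF Q(2)] by blast
    obtain a where a: "a \<in> W" "A = S``{a}" using Q_elim A by blast
    obtain b where b: "b \<in> W" "B = S``{b}" using Q_elim B by blast
    have "Rp a x" "Rp b x" using A B QR_iff[OF a(1) x(1) a(2) x(2)] QR_iff[OF b(1) x(1) b(2) x(2)] by auto
    moreover have "ql a c" "ql c b" using h QL_iff[OF a(1) c(1) a(2) c(2)] QL_iff[OF c(1) b(1) c(2) b(2)] by auto
    ultimately have "Rp c x" using conv2 by blast
    then show "C \<in> {Y \<in> Q. QR Y X}" using Q(2) QR_iff[OF c(1) x(1) c(2) x(2)] by blast
  qed
next
  show "\<forall>X\<in>Q. \<forall>Y\<in>Q. QR X Y \<longrightarrow> sensible_pair \<Sigma> (quot_lab lab X) (quot_lab lab Y)"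
  proof (intro ballI impI)
    fix X Y assume Q: "X \<in> Q" "Y \<in> Q" and h: "QR X Y"
    obtain x where x: "x \<in> W" "X = S``{x}" using Q_elim[OF Q(1)] by blast
    obtain y where y: "y \<in> W" "Y = S``{y}" using Q_elim[OF Q(2)] by blast
    have "Rp x y" using h QR_iff[OF x(1) y(1) x(2) y(2)] by blast
    then have "sensible_pair \<Sigma> (lab x) (lab y)" using Rp_sens x(1) y(1) by blast
    then show "sensible_pair \<Sigma> (quot_lab lab X) (quot_lab lab Y)"
      using quot_lab_cls[OF x(1)] quot_lab_cls[OF y(1)] x(2) y(2) by simp
  qed
qed

end

theorem proposition6p2:
  fixes \<Sigma> :: "'a fml set" and W :: "'w set" and le R :: "'w \<Rightarrow> 'w \<Rightarrow> bool"
    and lab :: "'w \<Rightarrow> 'a fml set"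
  assumes "subfml_closed \<Sigma>"
    and "labelled_system \<Sigma> W le lab R"
  shows "labelled_system \<Sigma> (quotW W le lab) (quot_le W le lab) (quot_lab lab)
           (quot_Rplus W le lab R)"
proof -
  interpret lsys \<Sigma> W le R lab using assms(2) by unfold_locales
  show ?thesis by (rule qsys)
qed


end
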